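(* Let $\mathcal X_0\subset\mathcal X$ and $\mathcal Y_0\subset\mathcal Y$ be inclusions of operator systems and let $\alpha$ be a functorial operator system tensor product. Set $\mathcal R=\mathcal X\otimes_\alpha\mathcal Y$ and let $\mathcal R_0$ be $\mathcal X_0\otimes\mathcal Y_0$ with the operator system structure obtained by restriction from $\mathcal X\otimes_\alpha\mathcal Y$. Then $$\mathrm{Ind}_{\mathrm{CP}}(\mathcal R:\mathcal R_0)\le\mathrm{Ind}_{\mathrm{CP}}(\mathcal X:\mathcal X_0)\,\mathrm{Ind}_{\mathrm{CP}}(\mathcal Y:\mathcal Y_0).$$
   Context: For an operator system $\mathcal X$ with unit $1$, $\mathrm{CP}(\mathcal X)$ denotes the completely positive maps $\mathcal X\to\mathcal X$ and $\mathrm{CP}_1(\mathcal X)$ the set of $\varphi\in\mathrm{CP}(\mathcal X)$ with $\varphi(\mathbb C1)\subset\mathbb C1$. For an operator subsystem $\mathcal X_0\subset\mathcal X$, $\mathrm{Ind}_{\mathrm{CP}}(\mathcal X:\mathcal X_0)=\inf\{\|\varphi(1)\|:\varphi\in\mathrm{CP}_1(\mathcal X),\ \varphi(\mathcal X)\subset\mathcal X_0,\ \varphi-\mathrm{id}_{\mathcal X}\in\mathrm{CP}(\mathcal X)\}$ ($\infty$ if empty). An operator system structure on $\mathcal X\otimes\mathcal Y$ is a family of cones $\mathcal R_n\subset M_n(\mathcal X\otimes\mathcal Y)_h$ such that (1) $\mathcal X\otimes\mathcal Y$ with these cones and unit $1_{\mathcal X}\otimes1_{\mathcal Y}$ is an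 operator system; (2) $M_n(\mathcal X)^+\otimes M_m(\mathcal Y)^+\subset\mathcal R_{nm}$; (3) for unital completely positive $u:\mathcal X\to M_n$, $v:\mathcal Y\to M_m$, the map $u\otimes v:\mathcal X\otimes\mathcal Y\to M_{nm}$ is unital completely positive. An operator system tensor product $\alpha$ assigns such a structure $\mathcal X\otimes_\alpha\mathcal Y$ to every pair of operator systems; it is functorial if for all operator systems $\mathcal X,\mathcal Y,\mathcal S,\mathcal T$ and unital completely positive $u:\mathcal X\to\mathcal S$, $v:\mathcal Y\to\mathcal T$, the map $u\otimes v:\mathcal X\otimes_\alpha\mathcal Y\to\mathcal S\otimes_\alpha\mathcal T$ is unital completely positive. *)

theory Defs
  imports Complex_Main "HOL-Library.Function_Algebras" "HOL-Library.Extended_Real"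
begin

text \<open>Abstract operator systems (Choi--Effros), represented by a carrier set inside an
ambient additive group type, together with complex scalar multiplication, involution,
unit and the matrix cones.  An n x n matrix over V is a function nat => nat => V that
vanishes outside the index range {0..<n} x {0..<n}.\<close>

record 'v opsys =
  ocarrier :: "'v set"
  oscal :: "complex \<Rightarrow> 'v \<Rightarrow> 'v"
  ostar :: "'v \<Rightarrow> 'v"
  ounit :: "'v"
  ocone :: "nat \<Rightarrow> (nat \<Rightarrow> nat \<Rightarrow> 'v) set"

type_synonym 'v mat = "nat \<Rightarrow> nat \<Rightarrow> 'v"

definition Mn :: "'v::zero set \<Rightarrow> nat \<Rightarrow> 'v mat set" where
  "Mn S n = {A. (\<forall>i j. i < n \<and> j < n \<longrightarrow> A i j \<in> S) \<and>
                 (\<forall>i j. \<not> (i < n \<and> j < n) \<longrightarrow> A i j = 0)}"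

definition herm :: "('v::zero) opsys \<Rightarrow> nat \<Rightarrow> 'v mat set" where
  "herm X n = {A \<in> Mn (ocarrier X) n. \<forall>i<n. \<forall>j<n. A j i = ostar X (A i j)}"

definition unitm :: "('v::zero) opsys \<Rightarrow> nat \<Rightarrow> 'v mat" where
  "unitm X n = (\<lambda>i j. if i < n \<and> j < n \<and> i = j then ounit X else 0)"

definition madd :: "('v::plus) mat \<Rightarrow> 'v mat \<Rightarrow> 'v mat" where
  "madd A B = (\<lambda>i j. A i j + B i j)"

definition mscal :: "'v opsys \<Rightarrow> complex \<Rightarrow> 'v mat \<Rightarrow> 'v mat" where
  "mscal X c A = (\<lambda>i j. oscal X c (A i j))"

text \<open>beta^* A beta for an n x m complex matrix beta and A in M_n(X).\<close>
definition congr :: "('v::comm_monoid_add) opsys \<Rightarrow> nat \<Rightarrow> nat \<Rightarrow> complex mat \<Rightarrow> 'v mat \<Rightarrow> 'v mat" where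
  "congr X n m \<beta> A = (\<lambda>i j. if i < m \<and> j < m
      then (\<Sum>k<n. \<Sum>l<n. oscal X (cnj (\<beta> k i) * \<beta> l j) (A k l)) else 0)"

definition is_opsys :: "('v::ab_group_add) opsys \<Rightarrow> bool" where
  "is_opsys X \<longleftrightarrow>
     0 \<in> ocarrier X \<and>
     (\<forall>x\<in>ocarrier X. \<forall>y\<in>ocarrier X. x + y \<in> ocarrier X) \<and>
     (\<forall>c. \<forall>x\<in>ocarrier X. oscal X c x \<in> ocarrier X) \<and>
     (\<forall>c. \<forall>x\<in>ocarrier X. \<forall>y\<in>ocarrier X. oscal X c (x + y) = oscal X c x + oscal X c y) \<and>
     (\<forall>c d. \<forall>x\<in>ocarrier X. oscal X (c + d) x = oscal X c x + oscal X d x) \<and>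
     (\<forall>c d. \<forall>x\<in>ocarrier X. oscal X (c * d) x = oscal X c (oscal X d x)) \<and>
     (\<forall>x\<in>ocarrier X. oscal X 1 x = x) \<and>
     (\<forall>x\<in>ocarrier X. ostar X x \<in> ocarrier X) \<and>
     (\<forall>x\<in>ocarrier X. ostar X (ostar X x) = x) \<and>
     (\<forall>x\<in>ocarrier X. \<forall>y\<in>ocarrier X. ostar X (x + y) = ostar X x + ostar X y) \<and>
     (\<forall>c. \<forall>x\<in>ocarrier X. ostar X (oscal X c x) = oscal X (cnj c) (ostar X x)) \<and>
     ounit X \<in> ocarrier X \<and> ostar X (ounit X) = ounit X \<and>
     (\<forall>n>0. ocone X n \<subseteq> herm X n) \<and>
     (\<forall>n>0. \<forall>A\<in>ocone X n. \<forall>B\<in>ocone X n. madd A B \<in> ocone X n) \<and>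
     (\<forall>n>0. \<forall>r::real. r \<ge> 0 \<longrightarrow> (\<forall>A\<in>ocone X n. mscal X (of_real r) A \<in> ocone X n)) \<and>
     (\<forall>n>0. \<forall>m>0. \<forall>\<beta>. \<forall>A\<in>ocone X n. congr X n m \<beta> A \<in> ocone X m) \<and>
     (\<forall>n>0. \<forall>A\<in>ocone X n. (\<lambda>i j. - A i j) \<in> ocone X n \<longrightarrow> A = (\<lambda>i j. 0)) \<and>
     (\<forall>n>0. \<forall>A\<in>herm X n. \<exists>r::real. r > 0 \<and>
         madd (mscal X (of_real r) (unitm X n)) A \<in> ocone X n) \<and>
     (\<forall>n>0. \<forall>A\<in>herm X n.
         (\<forall>r::real. r > 0 \<longrightarrow> madd (mscal X (of_real r) (unitm X n)) A \<in> ocone X n)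
         \<longrightarrow> A \<in> ocone X n)"

definition restrict_os :: "('v::zero) opsys \<Rightarrow> 'v set \<Rightarrow> 'v opsys" where
  "restrict_os X S = X\<lparr>ocarrier := S, ocone := (\<lambda>n. ocone X n \<inter> Mn S n)\<rparr>"

definition subsystem :: "('v::ab_group_add) opsys \<Rightarrow> 'v opsys \<Rightarrow> bool" where
  "subsystem X0 X \<longleftrightarrow> is_opsys X \<and> ocarrier X0 \<subseteq> ocarrier X \<and>
      X0 = restrict_os X (ocarrier X0) \<and> is_opsys X0"

definition cp :: "('v::ab_group_add) opsys \<Rightarrow> ('w::ab_group_add) opsys \<Rightarrow> ('v \<Rightarrow> 'w) \<Rightarrow> bool" where
  "cp X S u \<longleftrightarrow>
     (\<forall>x\<in>ocarrier X. u x \<in> ocarrier S) \<and>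
     (\<forall>x\<in>ocarrier X. \<forall>y\<in>ocarrier X. u (x + y) = u x + u y) \<and>
     (\<forall>c. \<forall>x\<in>ocarrier X. u (oscal X c x) = oscal S c (u x)) \<and>
     (\<forall>n>0. \<forall>A\<in>ocone X n. (\<lambda>i j. u (A i j)) \<in> ocone S n)"

definition ucp :: "('v::ab_group_add) opsys \<Rightarrow> ('w::ab_group_add) opsys \<Rightarrow> ('v \<Rightarrow> 'w) \<Rightarrow> bool" where
  "ucp X S u \<longleftrightarrow> cp X S u \<and> u (ounit X) = ounit S"

definition psd :: "nat \<Rightarrow> complex mat \<Rightarrow> bool" where
  "psd N M \<longleftrightarrow> (\<forall>\<xi>::nat \<Rightarrow> complex.
     Im (\<Sum>i<N. \<Sum>j<N. cnj (\<xi> i) * M i j * \<xi> j) = 0 \<and>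
     Re (\<Sum>i<N. \<Sum>j<N. cnj (\<xi> i) * M i j * \<xi> j) \<ge> 0)"

text \<open>Kronecker-type block matrix: entry (i*m+k, j*m+l) is F i j k l.\<close>
definition kron :: "nat \<Rightarrow> nat \<Rightarrow> (nat \<Rightarrow> nat \<Rightarrow> nat \<Rightarrow> nat \<Rightarrow> 'a::zero) \<Rightarrow> 'a mat" where
  "kron n m F = (\<lambda>p q. if p < n * m \<and> q < n * m
      then F (p div m) (q div m) (p mod m) (q mod m) else 0)"

definition ucp_mat :: "('v::ab_group_add) opsys \<Rightarrow> nat \<Rightarrow> ('v \<Rightarrow> complex mat) \<Rightarrow> bool" where
  "ucp_mat X n u \<longleftrightarrow>
     (\<forall>x\<in>ocarrier X. u x \<in> Mn UNIV n) \<and>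
     (\<forall>x\<in>ocarrier X. \<forall>y\<in>ocarrier X. u (x + y) = (\<lambda>i j. u x i j + u y i j)) \<and>
     (\<forall>c. \<forall>x\<in>ocarrier X. u (oscal X c x) = (\<lambda>i j. c * u x i j)) \<and>
     u (ounit X) = (\<lambda>i j. if i < n \<and> j < n \<and> i = j then 1 else 0) \<and>
     (\<forall>k>0. \<forall>A\<in>ocone X k. psd (k * n) (kron k n (\<lambda>i j p q. u (A i j) p q)))"

text \<open>An element of X (x) Y is represented faithfully by the
bilinear pairing it induces on (linear functional on X) x (linear functional on Y);
x (x) y corresponds to (f,g) |-> f x * g y.  Linear functionals on X are normalised to
vanish outside the carrier.\<close>
definition linfun :: "('v::ab_group_add) opsys \<Rightarrow> ('v \<Rightarrow> complex) set" where
  "linfun X = {f. (\<forall>x\<in>ocarrier X. \<forall>y\<in>ocarrier X. f (x + y) = f x + f y) \<and>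
                  (\<forall>c. \<forall>x\<in>ocarrier X. f (oscal X c x) = c * f x) \<and>
                  (\<forall>x. x \<notin> ocarrier X \<longrightarrow> f x = 0)}"

type_synonym ('x, 'y) tens = "('x \<Rightarrow> complex) \<Rightarrow> ('y \<Rightarrow> complex) \<Rightarrow> complex"

definition tensor :: "('x::ab_group_add) opsys \<Rightarrow> ('y::ab_group_add) opsys \<Rightarrow> 'x \<Rightarrow> 'y \<Rightarrow> ('x, 'y) tens" where
  "tensor X Y x y = (\<lambda>f g. if f \<in> linfun X \<and> g \<in> linfun Y then f x * g y else 0)"

definition tens_span :: "('x::ab_group_add) opsys \<Rightarrow> ('y::ab_group_add) opsys \<Rightarrow> 'x set \<Rightarrow> 'y set \<Rightarrow> ('x, 'y) tens set" where
  "tens_span X Y A B = {(\<lambda>f g. \<Sum>k<N. tensor X Y (a k) (b k) f g) | (N::nat) a b.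
                          \<forall>k<N. a k \<in> A \<and> b k \<in> B}"

definition conjf :: "('v::ab_group_add) opsys \<Rightarrow> ('v \<Rightarrow> complex) \<Rightarrow> ('v \<Rightarrow> complex)" where
  "conjf X f = (\<lambda>x. if x \<in> ocarrier X then cnj (f (ostar X x)) else 0)"

text \<open>Involution on X (x) Y: (x (x) y)^* = x^* (x) y^*.\<close>
definition tstar :: "('x::ab_group_add) opsys \<Rightarrow> ('y::ab_group_add) opsys \<Rightarrow> ('x, 'y) tens \<Rightarrow> ('x, 'y) tens" where
  "tstar X Y t = (\<lambda>f g. if f \<in> linfun X \<and> g \<in> linfun Y
                         then cnj (t (conjf X f) (conjf Y g)) else 0)"

definition tensor_os :: "('x::ab_group_add) opsys \<Rightarrow> ('y::ab_group_add) opsys \<Rightarrow>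
    (nat \<Rightarrow> ('x, 'y) tens mat set) \<Rightarrow> ('x, 'y) tens opsys" where
  "tensor_os X Y R = \<lparr>ocarrier = tens_span X Y (ocarrier X) (ocarrier Y),
                      oscal = (\<lambda>c t f g. c * t f g),
                      ostar = tstar X Y,
                      ounit = tensor X Y (ounit X) (ounit Y),
                      ocone = R\<rparr>"

definition tmap :: "('x::ab_group_add) opsys \<Rightarrow> ('y::ab_group_add) opsys \<Rightarrow> 'x opsys \<Rightarrow> 'y opsys \<Rightarrow>
    ('x \<Rightarrow> 'x) \<Rightarrow> ('y \<Rightarrow> 'y) \<Rightarrow> ('x, 'y) tens \<Rightarrow> ('x, 'y) tens" where
  "tmap X Y S T u v t = (\<lambda>f g. if f \<in> linfun S \<and> g \<in> linfun T
      then t (\<lambda>x. if x \<in> ocarrier X then f (u x) else 0)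
             (\<lambda>y. if y \<in> ocarrier Y then g (v y) else 0)
      else 0)"

definition os_structure :: "('x::ab_group_add) opsys \<Rightarrow> ('y::ab_group_add) opsys \<Rightarrow>
    (nat \<Rightarrow> ('x, 'y) tens mat set) \<Rightarrow> bool" where
  "os_structure X Y R \<longleftrightarrow>
     is_opsys (tensor_os X Y R) \<and>
     (\<forall>n>0. \<forall>m>0. \<forall>A\<in>ocone X n. \<forall>B\<in>ocone Y m.
        kron n m (\<lambda>i j k l. tensor X Y (A i j) (B k l)) \<in> R (n * m)) \<and>
     (\<forall>n>0. \<forall>m>0. \<forall>u v. ucp_mat X n u \<and> ucp_mat Y m v \<longrightarrow>
        ucp_mat (tensor_os X Y R) (n * m)
          (\<lambda>t. kron n m (\<lambda>i j k l. t (\<lambda>x. if x \<in> ocarrier X then u x i j else 0)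
                                     (\<lambda>y. if y \<in> ocarrier Y then v y k l else 0))))"

definition os_tensor_product :: "('x::ab_group_add opsys \<Rightarrow> 'y::ab_group_add opsys \<Rightarrow>
    nat \<Rightarrow> ('x, 'y) tens mat set) \<Rightarrow> bool" where
  "os_tensor_product \<alpha> \<longleftrightarrow>
     (\<forall>X Y. is_opsys X \<and> is_opsys Y \<longrightarrow> os_structure X Y (\<alpha> X Y))"

definition functorial :: "('x::ab_group_add opsys \<Rightarrow> 'y::ab_group_add opsys \<Rightarrow>
    nat \<Rightarrow> ('x, 'y) tens mat set) \<Rightarrow> bool" where
  "functorial \<alpha> \<longleftrightarrow>
     (\<forall>X S Y T. is_opsys X \<and> is_opsys Y \<and> is_opsys S \<and> is_opsys T \<longrightarrow>
        (\<forall>u v. ucp X S u \<and> ucp Y T v \<longrightarrow>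
           ucp (tensor_os X Y (\<alpha> X Y)) (tensor_os S T (\<alpha> S T)) (tmap X Y S T u v)))"

definition opnorm :: "('v::ab_group_add) opsys \<Rightarrow> 'v \<Rightarrow> real" where
  "opnorm X x = Inf {r. r \<ge> 0 \<and>
     (\<lambda>i j. if i < 2 \<and> j < 2 then
              (if i = j then oscal X (of_real r) (ounit X) else if i = 0 then x else ostar X x)
            else 0) \<in> ocone X 2}"

text \<open>Ind_CP(X : X0), infinity if the defining set is empty.\<close>
definition ind_cp :: "('v::ab_group_add) opsys \<Rightarrow> 'v opsys \<Rightarrow> ereal" where
  "ind_cp X X0 = Inf {ereal (opnorm X (\<phi> (ounit X))) | \<phi>.
      cp X X \<phi> \<and>
      (\<forall>c. \<exists>d. \<phi> (oscal X c (ounit X)) = oscal X d (ounit X)) \<and>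
      (\<forall>x\<in>ocarrier X. \<phi> x \<in> ocarrier X0) \<and>
      cp X X (\<lambda>x. \<phi> x - x)}"

end

theory Submission
  imports Defs
begin


lemma os_zero: "is_opsys X \<Longrightarrow> 0 \<in> ocarrier X" by (unfold is_opsys_def, elim conjE, blast)
lemma os_add: "is_opsys X \<Longrightarrow> x \<in> ocarrier X \<Longrightarrow> y \<in> ocarrier X \<Longrightarrow> x + y \<in> ocarrier X" by (unfold is_opsys_def, elim conjE, blast)
lemma os_scal: "is_opsys X \<Longrightarrow> x \<in> ocarrier X \<Longrightarrow> oscal X c x \<in> ocarrier X" by (unfold is_opsys_def, elim conjE, blast)
lemma os_scal_add: "is_opsys X \<Longrightarrow> x \<in> ocarrier X \<Longrightarrow> y \<in> ocarrier X \<Longrightarrow> oscal X c (x + y) = oscal X c x + oscal X c y" by (unfold is_opsys_def, elim conjE, blast)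
lemma os_add_scal: "is_opsys X \<Longrightarrow> x \<in> ocarrier X \<Longrightarrow> oscal X (c + d) x = oscal X c x + oscal X d x" by (unfold is_opsys_def, elim conjE, blast)
lemma os_mult_scal: "is_opsys X \<Longrightarrow> x \<in> ocarrier X \<Longrightarrow> oscal X (c * d) x = oscal X c (oscal X d x)" by (unfold is_opsys_def, elim conjE, blast)
lemma os_one_scal: "is_opsys X \<Longrightarrow> x \<in> ocarrier X \<Longrightarrow> oscal X 1 x = x" by (unfold is_opsys_def, elim conjE, blast)
lemma os_star: "is_opsys X \<Longrightarrow> x \<in> ocarrier X \<Longrightarrow> ostar X x \<in> ocarrier X" by (unfold is_opsys_def, elim conjE, blast)
lemma os_star_star: "is_opsys X \<Longrightarrow> x \<in> ocarrier X \<Longrightarrow> ostar X (ostar X x) = x" by (unfold is_opsys_def, elim conjE, blast)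
lemma os_star_add: "is_opsys X \<Longrightarrow> x \<in> ocarrier X \<Longrightarrow> y \<in> ocarrier X \<Longrightarrow> ostar X (x + y) = ostar X x + ostar X y" by (unfold is_opsys_def, elim conjE, blast)
lemma os_star_scal: "is_opsys X \<Longrightarrow> x \<in> ocarrier X \<Longrightarrow> ostar X (oscal X c x) = oscal X (cnj c) (ostar X x)" by (unfold is_opsys_def, elim conjE, blast)
lemma os_unit: "is_opsys X \<Longrightarrow> ounit X \<in> ocarrier X" by (unfold is_opsys_def, elim conjE, blast)
lemma os_star_unit: "is_opsys X \<Longrightarrow> ostar X (ounit X) = ounit X" by (unfold is_opsys_def, elim conjE, blast)
lemma os_cone_herm: "is_opsys X \<Longrightarrow> n > 0 \<Longrightarrow> A \<in> ocone X n \<Longrightarrow> A \<in> herm X n" unfolding is_opsys_def by (elim conjE) (meson subsetD)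
lemma os_cone_add: "is_opsys X \<Longrightarrow> n > 0 \<Longrightarrow> A \<in> ocone X n \<Longrightarrow> B \<in> ocone X n \<Longrightarrow> madd A B \<in> ocone X n" unfolding is_opsys_def by meson
lemma os_cone_scal: "is_opsys X \<Longrightarrow> n > 0 \<Longrightarrow> r \<ge> 0 \<Longrightarrow> A \<in> ocone X n \<Longrightarrow> mscal X (of_real r) A \<in> ocone X n" unfolding is_opsys_def by meson
lemma os_cone_congr: "is_opsys X \<Longrightarrow> n > 0 \<Longrightarrow> m > 0 \<Longrightarrow> A \<in> ocone X n \<Longrightarrow> congr X n m \<beta> A \<in> ocone X m" unfolding is_opsys_def by meson
lemma os_cone_proper: "is_opsys X \<Longrightarrow> n > 0 \<Longrightarrow> A \<in> ocone X n \<Longrightarrow> (\<lambda>i j. - A i j) \<in> ocone X n \<Longrightarrow> A = (\<lambda>i j. 0)" unfolding is_opsys_def by meson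
lemma os_arch: "is_opsys X \<Longrightarrow> n > 0 \<Longrightarrow> A \<in> herm X n \<Longrightarrow> \<exists>r::real. r > 0 \<and> madd (mscal X (of_real r) (unitm X n)) A \<in> ocone X n" unfolding is_opsys_def by meson

lemma cone_Mn: "is_opsys X \<Longrightarrow> n > 0 \<Longrightarrow> A \<in> ocone X n \<Longrightarrow> A \<in> Mn (ocarrier X) n"
  using os_cone_herm herm_def by blast
lemma cone_in: "is_opsys X \<Longrightarrow> n > 0 \<Longrightarrow> A \<in> ocone X n \<Longrightarrow> i < n \<Longrightarrow> j < n \<Longrightarrow> A i j \<in> ocarrier X"
  using cone_Mn Mn_def by blast
lemma cone_out: "is_opsys X \<Longrightarrow> n > 0 \<Longrightarrow> A \<in> ocone X n \<Longrightarrow> \<not> (i < n \<and> j < n) \<Longrightarrow> A i j = 0"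
  using cone_Mn Mn_def by blast

lemma scal_0l: "is_opsys X \<Longrightarrow> x \<in> ocarrier X \<Longrightarrow> oscal X 0 x = 0"
  using os_add_scal[of X x 0 0] by simp
lemma scal_0r: "is_opsys X \<Longrightarrow> oscal X c 0 = 0"
  using os_scal_add[of X 0 0 c] os_zero[of X] by simp
lemma scal_neg: "is_opsys X \<Longrightarrow> x \<in> ocarrier X \<Longrightarrow> oscal X (- c) x = - oscal X c x"
  using os_add_scal[of X x c "-c"] scal_0l[of X x] by (simp add: eq_neg_iff_add_eq_0 add.commute)
lemma neg_in: "is_opsys X \<Longrightarrow> x \<in> ocarrier X \<Longrightarrow> - x \<in> ocarrier X"
  using scal_neg[of X x 1] os_one_scal os_scal by metis
lemma diff_in: "is_opsys X \<Longrightarrow> x \<in> ocarrier X \<Longrightarrow> y \<in> ocarrier X \<Longrightarrow> x - y \<in> ocarrier X"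
  using neg_in os_add by (metis diff_conv_add_uminus)
lemma scal_diff: "is_opsys X \<Longrightarrow> x \<in> ocarrier X \<Longrightarrow> y \<in> ocarrier X \<Longrightarrow> oscal X c (x - y) = oscal X c x - oscal X c y"
  using os_scal_add[of X "x - y" y c] diff_in by (metis add_diff_cancel diff_add_cancel)
lemma scal_diffl: "is_opsys X \<Longrightarrow> x \<in> ocarrier X \<Longrightarrow> oscal X (c - d) x = oscal X c x - oscal X d x"
  using os_add_scal[of X x "c - d" d] by (metis add_diff_cancel diff_add_cancel)
lemma star_zero: "is_opsys X \<Longrightarrow> ostar X 0 = 0"
  using os_star_add[of X 0 0] os_zero[of X] by simp


lemma zero_herm: "is_opsys X \<Longrightarrow> (\<lambda>i j. 0) \<in> herm X n"
  by (simp add: herm_def Mn_def os_zero star_zero)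

lemma unitm_herm: "is_opsys X \<Longrightarrow> unitm X n \<in> herm X n"
  by (auto simp add: herm_def Mn_def unitm_def os_zero star_zero os_unit os_star_unit)

lemma cone_ne: "is_opsys X \<Longrightarrow> n > 0 \<Longrightarrow> \<exists>A. A \<in> ocone X n"
  using os_arch[OF _ _ zero_herm] by blast

lemma mscal_zero: "is_opsys X \<Longrightarrow> n > 0 \<Longrightarrow> A \<in> ocone X n \<Longrightarrow> mscal X 0 A = (\<lambda>i j. 0)"
  unfolding mscal_def
proof (intro ext)
  fix i j assume X: "is_opsys X" and n: "n > 0" and A: "A \<in> ocone X n"
  show "oscal X 0 (A i j) = 0"
  proof (cases "i < n \<and> j < n")
    case True thus ?thesis using cone_in[OF X n A] scal_0l[OF X] by blast
  next
    case False thus ?thesis using cone_out[OF X n A] scal_0r[OF X] by simp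
  qed
qed

lemma zero_cone: "is_opsys X \<Longrightarrow> n > 0 \<Longrightarrow> (\<lambda>i j. 0) \<in> ocone X n"
  using cone_ne[of X n] os_cone_scal[of X n 0] mscal_zero[of X n] by fastforce

lemma unitm_cone: assumes X: "is_opsys X" and n: "n > 0" shows "unitm X n \<in> ocone X n"
proof -
  obtain r :: real where r: "r > 0" "madd (mscal X (of_real r) (unitm X n)) (unitm X n) \<in> ocone X n"
    using os_arch[OF X n unitm_herm[OF X]] by blast
  have e: "madd (mscal X (of_real r) (unitm X n)) (unitm X n) = mscal X (of_real (r + 1)) (unitm X n)"
    by (auto simp: madd_def mscal_def unitm_def fun_eq_iff scal_0r[OF X] os_add_scal[OF X os_unit[OF X]]
        os_one_scal[OF X os_unit[OF X]])
  have "mscal X (of_real (1/(r+1))) (mscal X (of_real (r + 1)) (unitm X n)) \<in> ocone X n"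
    using os_cone_scal[OF X n, of "1/(r+1)"] r e by simp
  moreover have "mscal X (of_real (1/(r+1))) (mscal X (of_real (r + 1)) (unitm X n)) = unitm X n"
  proof -
    have ne: "complex_of_real (r+1) \<noteq> 0" using r by (simp only: of_real_eq_0_iff)
    have "oscal X (of_real (1/(r+1))) (oscal X (of_real (r + 1)) (ounit X)) = ounit X"
      using ne os_mult_scal[OF X os_unit[OF X], of "of_real (1/(r+1))" "of_real (r+1)", symmetric] r
      by (simp add: os_one_scal[OF X os_unit[OF X]] flip: of_real_mult)
    thus ?thesis by (auto simp: mscal_def unitm_def fun_eq_iff scal_0r[OF X])
  qed
  ultimately show ?thesis by simp
qed

lemma sunit_cone: "is_opsys X \<Longrightarrow> n > 0 \<Longrightarrow> r \<ge> 0 \<Longrightarrow> mscal X (of_real r) (unitm X n) \<in> ocone X n"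
  using os_cone_scal unitm_cone by blast




lemma cp_in: "cp X S u \<Longrightarrow> x \<in> ocarrier X \<Longrightarrow> u x \<in> ocarrier S" unfolding cp_def by blast
lemma cp_add: "cp X S u \<Longrightarrow> x \<in> ocarrier X \<Longrightarrow> y \<in> ocarrier X \<Longrightarrow> u (x + y) = u x + u y" unfolding cp_def by blast
lemma cp_scal: "cp X S u \<Longrightarrow> x \<in> ocarrier X \<Longrightarrow> u (oscal X c x) = oscal S c (u x)" unfolding cp_def by blast
lemma cp_cone: "cp X S u \<Longrightarrow> n > 0 \<Longrightarrow> A \<in> ocone X n \<Longrightarrow> (\<lambda>i j. u (A i j)) \<in> ocone S n" unfolding cp_def by blast
lemma cp_0: "is_opsys X \<Longrightarrow> cp X S u \<Longrightarrow> u 0 = 0"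
  using cp_add[of X S u 0 0] os_zero[of X] by simp

definition m1 :: "'v::zero \<Rightarrow> 'v mat" where "m1 x = (\<lambda>i j. if i < 1 \<and> j < 1 then x else 0)"

lemma m1_eq: "m1 x = m1 y \<Longrightarrow> x = y" unfolding m1_def by (metis less_one)

lemma zero_lemma:
  assumes X: "is_opsys X" and w: "cp X X w" and w1: "w (ounit X) = 0" and x: "x \<in> ocarrier X"
  shows "w x = 0"
proof -
  let ?A = "\<lambda>k l. if k<2 \<and> l<2 then (if k=l then 0 else if k=0 then x else ostar X x) else (0::'a)"
  have Ah: "?A \<in> herm X 2"
    using x os_star[OF X x] os_zero[OF X] os_star_star[OF X x] star_zero[OF X]
    unfolding herm_def Mn_def by auto
  obtain r :: real where r: "r > 0" "madd (mscal X (of_real r) (unitm X 2)) ?A \<in> ocone X 2"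
    using os_arch[OF X _ Ah] by auto
  define a where "a = w x"
  define b where "b = w (ostar X x)"
  have a: "a \<in> ocarrier X" using cp_in[OF w x] a_def by simp
  have b: "b \<in> ocarrier X" using cp_in[OF w os_star[OF X x]] b_def by simp
  have wr: "w (oscal X (of_real r) (ounit X)) = 0"
    using cp_scal[OF w os_unit[OF X]] w1 scal_0r[OF X] by simp
  have W: "(\<lambda>k l. w (madd (mscal X (of_real r) (unitm X 2)) ?A k l)) =
      (\<lambda>k l. if k<2 \<and> l<2 then (if k=l then 0 else if k=0 then a else b) else 0)"
    by (auto simp: fun_eq_iff madd_def mscal_def unitm_def scal_0r[OF X] wr cp_0[OF X w] a_def b_def)
  have Wc: "(\<lambda>k l. if k<2 \<and> l<2 then (if k=l then 0 else if k=0 then a else b) else 0) \<in> ocone X 2"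
    using cp_cone[OF w _ r(2)] W by simp
  have P: "m1 (oscal X t a + oscal X (cnj t) b) \<in> ocone X 1" for t
  proof -
    let ?\<beta> = "\<lambda>k i. if k = 0 then 1 else t"
    have "congr X 2 1 ?\<beta> (\<lambda>k l. if k<2 \<and> l<2 then (if k=l then 0 else if k=0 then a else b) else 0)
        = m1 (oscal X t a + oscal X (cnj t) b)"
      by (auto simp: fun_eq_iff congr_def m1_def numeral_2_eq_2 scal_0r[OF X])
    thus ?thesis using os_cone_congr[OF X _ _ Wc, of 1 ?\<beta>] by simp
  qed
  have Z: "oscal X t a + oscal X (cnj t) b = 0" for t
  proof -
    have "(\<lambda>i j. - m1 (oscal X t a + oscal X (cnj t) b) i j) = m1 (oscal X (-t) a + oscal X (cnj (-t)) b)"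
      by (auto simp: fun_eq_iff m1_def scal_neg[OF X a] scal_neg[OF X b])
    hence "m1 (oscal X t a + oscal X (cnj t) b) = (\<lambda>i j. 0)"
      using os_cone_proper[OF X _ P[of t]] P[of "-t"] by simp
    thus ?thesis unfolding m1_def by (metis less_one)
  qed
  have ab: "a + b = 0" using Z[of 1] os_one_scal[OF X a] os_one_scal[OF X b] by simp
  have "oscal X \<i> a + oscal X (- \<i>) b = 0" using Z[of \<i>] by simp
  hence "oscal X \<i> a = oscal X \<i> b" using scal_neg[OF X b, of \<i>] by (simp add: add_eq_0_iff2)
  hence "oscal X (- \<i>) (oscal X \<i> a) = oscal X (- \<i>) (oscal X \<i> b)" by simp
  hence "a = b" using os_mult_scal[OF X a, of "-\<i>" "\<i>"] os_mult_scal[OF X b, of "-\<i>" "\<i>"]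
      os_one_scal[OF X a] os_one_scal[OF X b] by simp
  hence "oscal X 2 a = 0" using ab os_add_scal[OF X a, of 1 1] os_one_scal[OF X a] by simp
  hence "oscal X (1/2) (oscal X 2 a) = 0" using scal_0r[OF X] by simp
  thus ?thesis using os_mult_scal[OF X a, of "1/2" 2] os_one_scal[OF X a] a_def by simp
qed


lemma unitm1: "unitm X 1 = m1 (ounit X)" by (auto simp: unitm_def m1_def fun_eq_iff)

lemma cp_m1: "is_opsys X \<Longrightarrow> cp X S w \<Longrightarrow> (\<lambda>i j. w (m1 x i j)) = m1 (w x)"
  using cp_0 by (auto simp: m1_def fun_eq_iff)

lemma mscal_m1: "is_opsys X \<Longrightarrow> mscal X c (m1 x) = m1 (oscal X c x)"
  using scal_0r by (auto simp: m1_def mscal_def fun_eq_iff)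

lemma cone1:
  assumes X: "is_opsys X" and u: "ounit X \<noteq> 0" and c: "m1 (oscal X c (ounit X)) \<in> ocone X 1"
  shows "c = of_real (Re c) \<and> Re c \<ge> 0"
proof -
  note U = os_unit[OF X]
  have "m1 (oscal X c (ounit X)) \<in> herm X 1" using os_cone_herm[OF X _ c] by simp
  hence "oscal X c (ounit X) = ostar X (oscal X c (ounit X))" unfolding herm_def m1_def by auto
  hence "oscal X c (ounit X) = oscal X (cnj c) (ounit X)" using os_star_scal[OF X U] os_star_unit[OF X] by simp
  hence e: "oscal X (cnj c - c) (ounit X) = 0" using scal_diffl[OF X U] by simp
  have cc: "cnj c = c"
  proof (rule ccontr)
    assume "cnj c \<noteq> c"
    hence "oscal X (1/(cnj c - c)) (oscal X (cnj c - c) (ounit X)) = ounit X"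
      using os_mult_scal[OF X U, of "1/(cnj c - c)" "cnj c - c", symmetric] os_one_scal[OF X U] by simp
    thus False using e scal_0r[OF X] u by simp
  qed
  hence c1: "c = of_real (Re c)" by (auto simp: complex_eq_iff)
  define rc where "rc = Re c"
  have c2: "c = of_real rc" unfolding rc_def by (rule c1)
  have "rc \<ge> 0"
  proof (rule ccontr)
    assume neg: "\<not> rc \<ge> 0"
    have "0 \<le> -1/rc" using neg by simp
    hence m0: "mscal X (of_real (-1/rc)) (m1 (oscal X c (ounit X))) \<in> ocone X 1"
      using os_cone_scal[OF X _ _ c, of "-1/rc"] by simp
    have e1: "(-1/rc) * rc = -1" using neg by simp
    have e2: "of_real (-1/rc) * c = (-1::complex)" unfolding c2 of_real_mult[symmetric] e1 by simp
    have "oscal X (of_real (-1/rc)) (oscal X c (ounit X)) = oscal X (-1) (ounit X)"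
      using os_mult_scal[OF X U, of "of_real (-1/rc)" c] e2 by simp
    also have "\<dots> = - ounit X" using scal_neg[OF X U, of 1] os_one_scal[OF X U] by simp
    finally have e3: "oscal X (of_real (-1/rc)) (oscal X c (ounit X)) = - ounit X" .
    have m: "m1 (- ounit X) \<in> ocone X 1" using m0 unfolding mscal_m1[OF X] e3 .
    have e4: "(\<lambda>i j. - m1 (ounit X) i j) = m1 (- ounit X)" by (auto simp: m1_def fun_eq_iff)
    have uc: "m1 (ounit X) \<in> ocone X 1" using unitm_cone[OF X, of 1] unfolding unitm1 by simp
    have "m1 (ounit X) = (\<lambda>i j. 0)" using os_cone_proper[OF X _ uc] m unfolding e4 by simp
    thus False using u unfolding m1_def by (metis less_one)
  qed
  thus ?thesis using c1 unfolding rc_def by blast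
qed

lemma adm_scalar:
  assumes X: "is_opsys X" and u: "ounit X \<noteq> 0" and p: "cp X X \<phi>" and d: "\<phi> (ounit X) = oscal X d (ounit X)"
    and q: "cp X X (\<lambda>x. \<phi> x - x)"
  shows "\<exists>r::real. r \<ge> 0 \<and> d = of_real (1 + r)"
proof -
  note U = os_unit[OF X]
  have "(\<lambda>i j. (\<lambda>x. \<phi> x - x) (unitm X 1 i j)) \<in> ocone X 1" using cp_cone[OF q _ unitm_cone[OF X]] by simp
  hence "m1 (\<phi> (ounit X) - ounit X) \<in> ocone X 1" using cp_m1[OF X q] unitm1 by metis
  moreover have "\<phi> (ounit X) - ounit X = oscal X (d - 1) (ounit X)"
    using d scal_diffl[OF X U, of d 1] os_one_scal[OF X U] by simp
  ultimately have m: "m1 (oscal X (d - 1) (ounit X)) \<in> ocone X 1" by simp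
  have h: "d - 1 = of_real (Re (d - 1))" "Re (d - 1) \<ge> 0" using cone1[OF X u m] by auto
  have "d = of_real (1 + Re (d - 1))" unfolding of_real_add of_real_1 h(1)[symmetric] by simp
  thus ?thesis using h(2) by blast
qed

lemma oscal_sum:
  assumes X: "is_opsys X" and x: "x \<in> ocarrier X" and A: "finite A"
  shows "(\<Sum>k\<in>A. oscal X (f k) x) = oscal X (\<Sum>k\<in>A. f k) x"
  using A
proof (induction A rule: finite_induct)
  case empty thus ?case using scal_0l[OF X x] by simp
next
  case (insert a A) thus ?case using os_add_scal[OF X x] by simp
qed

definition nmat :: "'v::ab_group_add opsys \<Rightarrow> real \<Rightarrow> 'v \<Rightarrow> 'v mat" where
  "nmat X r x = (\<lambda>i j. if i < 2 \<and> j < 2 then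
              (if i = j then oscal X (of_real r) (ounit X) else if i = 0 then x else ostar X x)
            else 0)"

lemma opnorm_nmat: "opnorm X x = Inf {r. r \<ge> 0 \<and> nmat X r x \<in> ocone X 2}"
  unfolding opnorm_def nmat_def by simp

lemma nmat_scal_unit:
  assumes X: "is_opsys X" and s: "s \<ge> 0"
  shows "nmat X s (oscal X (of_real s) (ounit X)) \<in> ocone X 2"
proof -
  note U = os_unit[OF X]
  have "mscal X (of_real s) (unitm X 1) \<in> ocone X 1" by (rule sunit_cone[OF X _ s]) simp
  hence c: "m1 (oscal X (of_real s) (ounit X)) \<in> ocone X 1" unfolding unitm1 mscal_m1[OF X] .
  have "congr X 1 2 (\<lambda>k i. 1) (m1 (oscal X (of_real s) (ounit X))) = nmat X s (oscal X (of_real s) (ounit X))"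
    using os_scal[OF X U] by (auto simp: fun_eq_iff congr_def m1_def nmat_def os_one_scal[OF X]
        os_star_scal[OF X U] os_star_unit[OF X])
  moreover have "congr X 1 2 (\<lambda>k i. 1) (m1 (oscal X (of_real s) (ounit X))) \<in> ocone X 2"
    by (rule os_cone_congr[OF X _ _ c]) simp_all
  ultimately show ?thesis by simp
qed

lemma opnorm_upper:
  assumes X: "is_opsys X" and s: "s \<ge> 0"
  shows "opnorm X (oscal X (of_real s) (ounit X)) \<le> s"
  unfolding opnorm_nmat
  by (rule cInf_lower) (use nmat_scal_unit[OF X s] s in auto)

lemma opnorm_nonneg:
  assumes X: "is_opsys X" and x: "x \<in> ocarrier X"
  shows "opnorm X x \<ge> 0"
proof -
  let ?A = "\<lambda>k l. if k<2 \<and> l<2 then (if k=l then 0 else if k=0 then x else ostar X x) else (0::'a)"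
  have Ah: "?A \<in> herm X 2"
    using x os_star[OF X x] os_zero[OF X] os_star_star[OF X x] star_zero[OF X]
    unfolding herm_def Mn_def by auto
  obtain r :: real where r: "r > 0" "madd (mscal X (of_real r) (unitm X 2)) ?A \<in> ocone X 2"
    using os_arch[OF X _ Ah] by auto
  have "madd (mscal X (of_real r) (unitm X 2)) ?A = nmat X r x"
    by (auto simp: fun_eq_iff madd_def mscal_def unitm_def nmat_def scal_0r[OF X])
  hence "r \<in> {r. r \<ge> 0 \<and> nmat X r x \<in> ocone X 2}" using r by simp
  thus ?thesis unfolding opnorm_nmat by (intro cInf_greatest) auto
qed

lemma opnorm_lower:
  assumes X: "is_opsys X" and u: "ounit X \<noteq> 0" and d: "d \<ge> 0"
  shows "opnorm X (oscal X (of_real d) (ounit X)) \<ge> d"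
  unfolding opnorm_nmat
proof (rule cInf_greatest)
  show "{r. r \<ge> 0 \<and> nmat X r (oscal X (of_real d) (ounit X)) \<in> ocone X 2} \<noteq> {}"
    using nmat_scal_unit[OF X d] d by auto
next
  note U = os_unit[OF X]
  fix r assume "r \<in> {r. r \<ge> 0 \<and> nmat X r (oscal X (of_real d) (ounit X)) \<in> ocone X 2}"
  hence M: "nmat X r (oscal X (of_real d) (ounit X)) \<in> ocone X 2" by simp
  let ?\<beta> = "\<lambda>(k::nat) (i::nat). if k = 0 then 1 else (-1::complex)"
  let ?N = "nmat X r (oscal X (of_real d) (ounit X))"
  let ?cc = "\<lambda>(k::nat) (l::nat). if k = l then complex_of_real r else of_real d"
  have Nk: "?N k l = oscal X (?cc k l) (ounit X)" if "k < 2" "l < 2" for k l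
    using that by (auto simp: nmat_def os_star_scal[OF X U] os_star_unit[OF X])
  have "(\<Sum>k<2. \<Sum>l<2. oscal X (cnj (?\<beta> k 0) * ?\<beta> l 0) (?N k l))
      = (\<Sum>k<2. \<Sum>l<2. oscal X (cnj (?\<beta> k 0) * ?\<beta> l 0 * ?cc k l) (ounit X))"
    by (intro sum.cong refl) (simp add: Nk os_mult_scal[OF X U])
  also have "\<dots> = oscal X (\<Sum>k<2. \<Sum>l<2. cnj (?\<beta> k 0) * ?\<beta> l 0 * ?cc k l) (ounit X)"
    by (simp add: oscal_sum[OF X U])
  also have "(\<Sum>k<2. \<Sum>l<2. cnj (?\<beta> k 0) * ?\<beta> l 0 * ?cc k l) = of_real (2*(r-d))"
    by (simp add: numeral_2_eq_2)
  finally have S: "(\<Sum>k<2. \<Sum>l<2. oscal X (cnj (?\<beta> k 0) * ?\<beta> l 0) (?N k l)) = oscal X (of_real (2*(r-d))) (ounit X)" .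
  have "congr X 2 1 ?\<beta> ?N = m1 (oscal X (of_real (2*(r-d))) (ounit X))"
    unfolding congr_def m1_def using S by (auto simp: fun_eq_iff)
  hence "m1 (oscal X (of_real (2*(r-d))) (ounit X)) \<in> ocone X 1" using os_cone_congr[OF X _ _ M, of 1 ?\<beta>] by simp
  hence "Re (of_real (2*(r-d))) \<ge> 0" using cone1[OF X u] by blast
  thus "d \<le> r" by simp
qed




lemma linfun_add: "f \<in> linfun X \<Longrightarrow> x \<in> ocarrier X \<Longrightarrow> y \<in> ocarrier X \<Longrightarrow> f (x + y) = f x + f y"
  unfolding linfun_def by blast
lemma linfun_scal: "f \<in> linfun X \<Longrightarrow> x \<in> ocarrier X \<Longrightarrow> f (oscal X c x) = c * f x"
  unfolding linfun_def by blast
lemma linfun_out: "f \<in> linfun X \<Longrightarrow> x \<notin> ocarrier X \<Longrightarrow> f x = 0"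
  unfolding linfun_def by blast
lemma linfun_0: "is_opsys X \<Longrightarrow> f \<in> linfun X \<Longrightarrow> f 0 = 0"
  using linfun_add[of f X 0 0] os_zero[of X] by simp
lemma linfun_diff: "is_opsys X \<Longrightarrow> f \<in> linfun X \<Longrightarrow> x \<in> ocarrier X \<Longrightarrow> y \<in> ocarrier X \<Longrightarrow> f (x - y) = f x - f y"
  using linfun_add[of f X "x - y" y] diff_in[of X x y] by simp

definition linmap :: "('v::ab_group_add) opsys \<Rightarrow> ('v \<Rightarrow> 'v) \<Rightarrow> bool" where
  "linmap X u \<longleftrightarrow> (\<forall>x\<in>ocarrier X. u x \<in> ocarrier X) \<and>
     (\<forall>x\<in>ocarrier X. \<forall>y\<in>ocarrier X. u (x + y) = u x + u y) \<and>
     (\<forall>c. \<forall>x\<in>ocarrier X. u (oscal X c x) = oscal X c (u x))"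

lemma cp_linmap: "cp X X u \<Longrightarrow> linmap X u" unfolding cp_def linmap_def by blast

lemma comp_linfun:
  assumes X: "is_opsys X" and u: "linmap X u" and f: "f \<in> linfun X"
  shows "(\<lambda>x. if x \<in> ocarrier X then f (u x) else 0) \<in> linfun X"
  using u f os_add[OF X] os_scal[OF X] unfolding linmap_def linfun_def by auto

lemma tmap_sum:
  assumes X: "is_opsys X" and Y: "is_opsys Y" and u: "linmap X u" and v: "linmap Y v"
    and ab: "\<forall>k<N. a k \<in> ocarrier X \<and> b k \<in> ocarrier Y"
  shows "tmap X Y X Y u v (\<lambda>f g. \<Sum>k<N. tensor X Y (a k) (b k) f g)
       = (\<lambda>f g. \<Sum>k<N. tensor X Y (u (a k)) (v (b k)) f g)"
proof (intro ext)
  fix f g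
  show "tmap X Y X Y u v (\<lambda>f g. \<Sum>k<N. tensor X Y (a k) (b k) f g) f g
       = (\<Sum>k<N. tensor X Y (u (a k)) (v (b k)) f g)"
  proof (cases "f \<in> linfun X \<and> g \<in> linfun Y")
    case True
    have f': "(\<lambda>x. if x \<in> ocarrier X then f (u x) else 0) \<in> linfun X" using comp_linfun[OF X u] True by blast
    have g': "(\<lambda>x. if x \<in> ocarrier Y then g (v x) else 0) \<in> linfun Y" using comp_linfun[OF Y v] True by blast
    show ?thesis unfolding tmap_def tensor_def using True f' g' by (auto intro!: sum.cong simp: ab)
  next
    case False thus ?thesis unfolding tmap_def tensor_def by auto
  qed
qed

lemma tensor_scal:
  assumes p: "p \<in> ocarrier X" and q: "q \<in> ocarrier Y"
  shows "tensor X Y (oscal X c p) (oscal Y d q) f g = c * d * tensor X Y p q f g"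
proof (cases "f \<in> linfun X \<and> g \<in> linfun Y")
  case True
  have "f (oscal X c p) = c * f p" using linfun_scal[of f X p c] True p by blast
  moreover have "g (oscal Y d q) = d * g q" using linfun_scal[of g Y q d] True q by blast
  ultimately show ?thesis unfolding tensor_def using True by simp
next
  case False thus ?thesis unfolding tensor_def by auto
qed

lemma tensor_zero: "is_opsys X \<Longrightarrow> tensor X Y 0 q = 0"
  unfolding tensor_def using linfun_0 by (auto simp: fun_eq_iff)
lemma tensor_zero2: "is_opsys Y \<Longrightarrow> tensor X Y p 0 = 0"
  unfolding tensor_def using linfun_0 by (auto simp: fun_eq_iff)

lemma span_obtain:
  assumes "t \<in> tens_span X Y A B"
  obtains N :: nat and a b where "\<forall>k<N. a k \<in> A \<and> b k \<in> B" "t = (\<lambda>f g. \<Sum>k<N. tensor X Y (a k) (b k) f g)"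
  using assms unfolding tens_span_def mem_Collect_eq by blast

lemma span_intro:
  "\<forall>k<(N::nat). a k \<in> A \<and> b k \<in> B \<Longrightarrow> (\<lambda>f g. \<Sum>k<N. tensor X Y (a k) (b k) f g) \<in> tens_span X Y A B"
  unfolding tens_span_def by (rule CollectI, rule exI[of _ N], rule exI[of _ a], rule exI[of _ b]) simp

lemma oscalR: "oscal (tensor_os X Y R) c t = (\<lambda>f g. c * t f g)" by (simp add: tensor_os_def)
lemma carrR: "ocarrier (tensor_os X Y R) = tens_span X Y (ocarrier X) (ocarrier Y)" by (simp add: tensor_os_def)
lemma unitR: "ounit (tensor_os X Y R) = tensor X Y (ounit X) (ounit Y)" by (simp add: tensor_os_def)
lemma coneR: "ocone (tensor_os X Y R) = R" by (simp add: tensor_os_def)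

lemma cp_scale:
  assumes X: "is_opsys X" and S: "is_opsys S" and u: "cp X S u" and r: "r \<ge> 0"
    and w: "\<forall>x\<in>ocarrier X. w x = oscal S (of_real r) (u x)"
  shows "cp X S w"
  unfolding cp_def
proof (intro conjI ballI allI impI)
  fix x assume x: "x \<in> ocarrier X"
  show "w x \<in> ocarrier S" using w x os_scal[OF S cp_in[OF u x]] by simp
  fix c show "w (oscal X c x) = oscal S c (w x)"
    using w x os_scal[OF X x] cp_scal[OF u x] os_mult_scal[OF S cp_in[OF u x]]
    by (simp flip: os_mult_scal[OF S cp_in[OF u x]] add: mult.commute)
next
  fix x y assume x: "x \<in> ocarrier X" and y: "y \<in> ocarrier X"
  show "w (x + y) = w x + w y"
    using w x y os_add[OF X x y] cp_add[OF u x y] os_scal_add[OF S cp_in[OF u x] cp_in[OF u y]] by simp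
next
  fix n A assume n: "0 < n" and A: "A \<in> ocone X n"
  have Ain: "A i j \<in> ocarrier X" for i j
    using cone_in[OF X n A] cone_out[OF X n A] os_zero[OF X] by metis
  have "(\<lambda>i j. w (A i j)) = mscal S (of_real r) (\<lambda>i j. u (A i j))"
    using w Ain by (simp add: mscal_def)
  thus "(\<lambda>i j. w (A i j)) \<in> ocone S n" using os_cone_scal[OF S n r cp_cone[OF u n A]] by simp
qed

lemma cp_sum:
  assumes X: "is_opsys X" and S: "is_opsys S" and u1: "cp X S u1" and u2: "cp X S u2"
    and w: "\<forall>x\<in>ocarrier X. w x = u1 x + u2 x"
  shows "cp X S w"
  unfolding cp_def
proof (intro conjI ballI allI impI)
  fix x assume x: "x \<in> ocarrier X"
  show "w x \<in> ocarrier S" using w x os_add[OF S cp_in[OF u1 x] cp_in[OF u2 x]] by simp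
  fix c show "w (oscal X c x) = oscal S c (w x)"
    using w x os_scal[OF X x] cp_scal[OF u1 x] cp_scal[OF u2 x] os_scal_add[OF S cp_in[OF u1 x] cp_in[OF u2 x]] by simp
next
  fix x y assume x: "x \<in> ocarrier X" and y: "y \<in> ocarrier X"
  show "w (x + y) = w x + w y"
    using w x y os_add[OF X x y] cp_add[OF u1 x y] cp_add[OF u2 x y] by (simp add: algebra_simps)
next
  fix n A assume n: "0 < n" and A: "A \<in> ocone X n"
  have Ain: "A i j \<in> ocarrier X" for i j
    using cone_in[OF X n A] cone_out[OF X n A] os_zero[OF X] by metis
  have "(\<lambda>i j. w (A i j)) = madd (\<lambda>i j. u1 (A i j)) (\<lambda>i j. u2 (A i j))"
    using w Ain by (simp add: madd_def)
  thus "(\<lambda>i j. w (A i j)) \<in> ocone S n" using os_cone_add[OF S n cp_cone[OF u1 n A] cp_cone[OF u2 n A]] by simp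
qed

lemma cp_zero:
  assumes X: "is_opsys X" and S: "is_opsys S" and w: "\<forall>x\<in>ocarrier X. w x = 0"
  shows "cp X S w"
  unfolding cp_def
proof (intro conjI ballI allI impI)
  fix x assume x: "x \<in> ocarrier X"
  show "w x \<in> ocarrier S" using w x os_zero[OF S] by simp
  fix c show "w (oscal X c x) = oscal S c (w x)" using w x os_scal[OF X x] scal_0r[OF S] by simp
next
  fix x y assume x: "x \<in> ocarrier X" and y: "y \<in> ocarrier X"
  show "w (x + y) = w x + w y" using w x y os_add[OF X x y] by simp
next
  fix n A assume n: "0 < n" and A: "A \<in> ocone X n"
  have Ain: "A i j \<in> ocarrier X" for i j
    using cone_in[OF X n A] cone_out[OF X n A] os_zero[OF X] by metis
  have "(\<lambda>i j. w (A i j)) = (\<lambda>i j. 0)" using w Ain by simp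
  thus "(\<lambda>i j. w (A i j)) \<in> ocone S n" using zero_cone[OF S n] by simp
qed

lemma cp_id: "cp X X (\<lambda>x. x)" unfolding cp_def by simp




lemma zero_on:
  assumes X: "is_opsys X" and w: "cp X X w" and w1: "w (ounit X) = oscal X (of_real 0) (ounit X)"
  shows "\<forall>x\<in>ocarrier X. w x = 0"
  using zero_lemma[OF X w] w1 scal_0l[OF X os_unit[OF X]] by simp

lemma tmap_zero1:
  assumes X: "is_opsys X" and Y: "is_opsys Y" and w: "linmap X w" and v: "linmap Y v"
    and w0: "\<forall>x\<in>ocarrier X. w x = 0" and t: "t \<in> tens_span X Y (ocarrier X) (ocarrier Y)"
  shows "tmap X Y X Y w v t = 0"
proof -
  obtain N :: nat and a b where ab: "\<forall>k<N. a k \<in> ocarrier X \<and> b k \<in> ocarrier Y"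
    and t: "t = (\<lambda>f g. \<Sum>k<N. tensor X Y (a k) (b k) f g)" using span_obtain[OF t] by blast
  show ?thesis unfolding t tmap_sum[OF X Y w v ab] using ab w0
    by (simp add: tensor_zero[OF X] fun_eq_iff)
qed

lemma tmap_zero2:
  assumes X: "is_opsys X" and Y: "is_opsys Y" and w: "linmap X w" and v: "linmap Y v"
    and v0: "\<forall>x\<in>ocarrier Y. v x = 0" and t: "t \<in> tens_span X Y (ocarrier X) (ocarrier Y)"
  shows "tmap X Y X Y w v t = 0"
proof -
  obtain N :: nat and a b where ab: "\<forall>k<N. a k \<in> ocarrier X \<and> b k \<in> ocarrier Y"
    and t: "t = (\<lambda>f g. \<Sum>k<N. tensor X Y (a k) (b k) f g)" using span_obtain[OF t] by blast
  show ?thesis unfolding t tmap_sum[OF X Y w v ab] using ab v0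
    by (simp add: tensor_zero2[OF Y] fun_eq_iff)
qed

lemma normalize_ucp:
  assumes X: "is_opsys X" and w: "cp X X w" and w1: "w (ounit X) = oscal X (of_real c) (ounit X)" and c: "c > 0"
  shows "ucp X X (\<lambda>x. oscal X (of_real (1/c)) (w x))"
  unfolding ucp_def
proof
  show "cp X X (\<lambda>x. oscal X (of_real (1/c)) (w x))"
    by (rule cp_scale[OF X X w, of "1/c"]) (use c in auto)
  have "oscal X (of_real (1/c)) (oscal X (of_real c) (ounit X)) = oscal X (of_real (1/c) * of_real c) (ounit X)"
    by (rule os_mult_scal[OF X os_unit[OF X], symmetric])
  also have "of_real (1/c) * of_real c = (1::complex)" using c by (simp flip: of_real_mult)
  finally show "oscal X (of_real (1/c)) (w (ounit X)) = ounit X" using w1 os_one_scal[OF X os_unit[OF X]] by simp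
qed

lemma sum_cancel: "(M::complex) * K = 1 \<Longrightarrow> M * (\<Sum>k\<in>A. K * T k) = (\<Sum>k\<in>A. T k)"
  by (simp add: sum_distrib_left mult.assoc[symmetric])

lemma cp_tmap:
  fixes \<alpha> :: "'x::ab_group_add opsys \<Rightarrow> 'y::ab_group_add opsys \<Rightarrow> nat \<Rightarrow> ('x, 'y) tens mat set"
  assumes X: "is_opsys X" and Y: "is_opsys Y" and RO: "is_opsys (tensor_os X Y (\<alpha> X Y))"
    and F: "functorial \<alpha>"
    and w: "cp X X w" and w1: "w (ounit X) = oscal X (of_real c) (ounit X)" and c: "c \<ge> 0"
    and v: "cp Y Y v" and v1: "v (ounit Y) = oscal Y (of_real c') (ounit Y)" and c': "c' \<ge> 0"
  shows "cp (tensor_os X Y (\<alpha> X Y)) (tensor_os X Y (\<alpha> X Y)) (tmap X Y X Y w v)"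
proof (cases "c = 0 \<or> c' = 0")
  case True
  have "\<forall>t\<in>ocarrier (tensor_os X Y (\<alpha> X Y)). tmap X Y X Y w v t = 0"
  proof
    fix t assume "t \<in> ocarrier (tensor_os X Y (\<alpha> X Y))"
    hence t: "t \<in> tens_span X Y (ocarrier X) (ocarrier Y)" by (simp add: carrR)
    show "tmap X Y X Y w v t = 0"
    proof (cases "c = 0")
      case True thus ?thesis using tmap_zero1[OF X Y cp_linmap[OF w] cp_linmap[OF v] zero_on[OF X w] t] w1 by simp
    next
      case False hence "c' = 0" using \<open>c = 0 \<or> c' = 0\<close> by simp
      thus ?thesis using tmap_zero2[OF X Y cp_linmap[OF w] cp_linmap[OF v] zero_on[OF Y v] t] v1 by simp
    qed
  qed
  thus ?thesis by (rule cp_zero[OF RO RO])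
next
  case False
  hence cp: "c > 0" "c' > 0" using c c' by auto
  define w' where "w' = (\<lambda>x. oscal X (of_real (1/c)) (w x))"
  define v' where "v' = (\<lambda>x. oscal Y (of_real (1/c')) (v x))"
  have uw: "ucp X X w'" unfolding w'_def by (rule normalize_ucp[OF X w w1 cp(1)])
  have uv: "ucp Y Y v'" unfolding v'_def by (rule normalize_ucp[OF Y v v1 cp(2)])
  have U: "ucp (tensor_os X Y (\<alpha> X Y)) (tensor_os X Y (\<alpha> X Y)) (tmap X Y X Y w' v')"
    using F X Y uw uv unfolding functorial_def by blast
  hence cU: "cp (tensor_os X Y (\<alpha> X Y)) (tensor_os X Y (\<alpha> X Y)) (tmap X Y X Y w' v')" unfolding ucp_def by blast
  have lw': "linmap X w'" using uw cp_linmap unfolding ucp_def by blast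
  have lv': "linmap Y v'" using uv cp_linmap unfolding ucp_def by blast
  show ?thesis
  proof (rule cp_scale[OF RO RO cU, of "c * c'"])
    show "0 \<le> c * c'" using cp by simp
    show "\<forall>t\<in>ocarrier (tensor_os X Y (\<alpha> X Y)). tmap X Y X Y w v t =
        oscal (tensor_os X Y (\<alpha> X Y)) (of_real (c * c')) (tmap X Y X Y w' v' t)"
    proof
      fix t assume "t \<in> ocarrier (tensor_os X Y (\<alpha> X Y))"
      hence t: "t \<in> tens_span X Y (ocarrier X) (ocarrier Y)" by (simp add: carrR)
      obtain N :: nat and a b where ab: "\<forall>k<N. a k \<in> ocarrier X \<and> b k \<in> ocarrier Y"
        and t: "t = (\<lambda>f g. \<Sum>k<N. tensor X Y (a k) (b k) f g)" using span_obtain[OF t] by blast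
      have e: "tensor X Y (w' (a k)) (v' (b k)) f g = of_real (1/c) * of_real (1/c') * tensor X Y (w (a k)) (v (b k)) f g"
        if "k < N" for k f g
        unfolding w'_def v'_def using tensor_scal[OF cp_in[OF w] cp_in[OF v]] ab that by blast
      have cc: "complex_of_real (c * c') * (of_real (1/c) * of_real (1/c')) = 1"
        using cp by (simp flip: of_real_mult)
      show "tmap X Y X Y w v t = oscal (tensor_os X Y (\<alpha> X Y)) (of_real (c * c')) (tmap X Y X Y w' v' t)"
        unfolding t tmap_sum[OF X Y cp_linmap[OF w] cp_linmap[OF v] ab] tmap_sum[OF X Y lw' lv' ab] oscalR
      proof (intro ext)
        fix f g
        have "(\<Sum>k<N. tensor X Y (w' (a k)) (v' (b k)) f g) =
            (\<Sum>k<N. of_real (1/c) * of_real (1/c') * tensor X Y (w (a k)) (v (b k)) f g)"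
          using e by (intro sum.cong) auto
        thus "(\<Sum>k<N. tensor X Y (w (a k)) (v (b k)) f g) =
          complex_of_real (c * c') * (\<Sum>k<N. tensor X Y (w' (a k)) (v' (b k)) f g)"
          using sum_cancel[OF cc, where A="{..<N}" and T="\<lambda>k. tensor X Y (w (a k)) (v (b k)) f g"] by simp
      qed
    qed
  qed
qed




lemma inf_prod:
  fixes L :: ereal and A B :: "real set"
  assumes A1: "\<forall>a\<in>A. a \<ge> 1" and B1: "\<forall>b\<in>B. b \<ge> 1" and L: "\<forall>a\<in>A. \<forall>b\<in>B. L \<le> ereal (a * b)"
  shows "L \<le> Inf (ereal ` A) * Inf (ereal ` B)"
proof -
  have IA: "Inf (ereal ` A) \<ge> 1" using A1 by (intro Inf_greatest) auto
  have IB: "Inf (ereal ` B) \<ge> 1" using B1 by (intro Inf_greatest) auto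
  have pA: "Inf (ereal ` A) > 0" by (rule less_le_trans[OF _ IA]) simp
  have pB: "Inf (ereal ` B) > 0" by (rule less_le_trans[OF _ IB]) simp
  show ?thesis
  proof (cases "A = {} \<or> B = {}")
    case True
    hence "Inf (ereal ` A) * Inf (ereal ` B) = \<infinity>"
    proof
      assume "A = {}" thus ?thesis using pB by (auto simp: top_ereal_def)
    next
      assume "B = {}" thus ?thesis using pA by (auto simp: top_ereal_def)
    qed
    thus ?thesis by (simp only:) simp
  next
    case False
    hence ne: "A \<noteq> {}" "B \<noteq> {}" by auto
    have bA: "bdd_below A" using A1 by (auto simp: bdd_below_def)
    have bB: "bdd_below B" using B1 by (auto simp: bdd_below_def)
    have ia: "Inf A \<ge> 1" using A1 ne by (intro cInf_greatest) auto
    have ib: "Inf B \<ge> 1" using B1 ne by (intro cInf_greatest) auto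
    have eA: "ereal (Inf A) \<le> Inf (ereal ` A)" using cInf_lower[OF _ bA] by (intro Inf_greatest) auto
    have eB: "ereal (Inf B) \<le> Inf (ereal ` B)" using cInf_lower[OF _ bB] by (intro Inf_greatest) auto
    have "L \<le> ereal (Inf A * Inf B)"
    proof (cases L)
      case (real l)
      have "l / b \<le> Inf A" if b: "b \<in> B" for b
      proof (rule cInf_greatest[OF ne(1)])
        fix a assume a: "a \<in> A"
        have "l \<le> a * b" using L a b real by auto
        moreover have "b > 0" using B1 b by force
        ultimately show "l / b \<le> a" by (simp add: divide_le_eq)
      qed
      hence "l / Inf A \<le> b" if b: "b \<in> B" for b
        using that B1 ia by (smt (verit, best) divide_le_eq mult.commute pos_divide_le_eq)
      hence "l / Inf A \<le> Inf B" using ne(2) by (intro cInf_greatest) auto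
      hence "l \<le> Inf A * Inf B" using ia by (simp add: divide_le_eq mult.commute)
      thus ?thesis using real by simp
    next
      case PInf
      then obtain a b where "a \<in> A" "b \<in> B" using ne by blast
      thus ?thesis using L PInf by force
    next
      case MInf thus ?thesis by simp
    qed
    also have "ereal (Inf A * Inf B) = ereal (Inf A) * ereal (Inf B)" by simp
    also have "\<dots> \<le> Inf (ereal ` A) * Inf (ereal ` B)"
      by (rule ereal_mult_mono') (use eA eB ia ib in auto)
    finally show ?thesis .
  qed
qed


lemma tmap_diff_eq:
  assumes X: "is_opsys X" and Y: "is_opsys Y" and p: "cp X X \<phi>" and q: "cp Y Y \<psi>"
    and pm: "cp X X (\<lambda>x. \<phi> x - x)" and qm: "cp Y Y (\<lambda>y. \<psi> y - y)"
    and t: "t \<in> tens_span X Y (ocarrier X) (ocarrier Y)"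
  shows "tmap X Y X Y \<phi> \<psi> t - t = tmap X Y X Y (\<lambda>x. \<phi> x - x) \<psi> t + tmap X Y X Y (\<lambda>x. x) (\<lambda>y. \<psi> y - y) t"
proof -
  obtain N :: nat and a b where ab: "\<forall>k<N. a k \<in> ocarrier X \<and> b k \<in> ocarrier Y"
    and t: "t = (\<lambda>f g. \<Sum>k<N. tensor X Y (a k) (b k) f g)" using span_obtain[OF t] by blast
  have li: "linmap X (\<lambda>x. x)" by (rule cp_linmap[OF cp_id])
  show ?thesis
    unfolding t tmap_sum[OF X Y cp_linmap[OF p] cp_linmap[OF q] ab] tmap_sum[OF X Y cp_linmap[OF pm] cp_linmap[OF q] ab]
      tmap_sum[OF X Y li cp_linmap[OF qm] ab]
  proof (intro ext)
    fix f g
    have e: "tensor X Y (\<phi> (a k)) (\<psi> (b k)) f g - tensor X Y (a k) (b k) f g =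
      tensor X Y (\<phi> (a k) - a k) (\<psi> (b k)) f g + tensor X Y (a k) (\<psi> (b k) - b k) f g" if k: "k < N" for k
    proof (cases "f \<in> linfun X \<and> g \<in> linfun Y")
      case True
      have a: "a k \<in> ocarrier X" and b: "b k \<in> ocarrier Y" using ab k by auto
      have h1: "f (\<phi> (a k) - a k) = f (\<phi> (a k)) - f (a k)" using linfun_diff[OF X _ cp_in[OF p a] a] True by blast
      have h2: "g (\<psi> (b k) - b k) = g (\<psi> (b k)) - g (b k)" using linfun_diff[OF Y _ cp_in[OF q b] b] True by blast
      show ?thesis unfolding tensor_def h1 h2 using True by (simp add: algebra_simps)
    next
      case False thus ?thesis unfolding tensor_def by auto
    qed
    show "((\<lambda>f g. \<Sum>k<N. tensor X Y (\<phi> (a k)) (\<psi> (b k)) f g) - (\<lambda>f g. \<Sum>k<N. tensor X Y (a k) (b k) f g)) f g =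
      ((\<lambda>f g. \<Sum>k<N. tensor X Y (\<phi> (a k) - a k) (\<psi> (b k)) f g) +
       (\<lambda>f g. \<Sum>k<N. tensor X Y (a k) (\<psi> (b k) - b k) f g)) f g"
      using e by (simp add: sum_subtractf[symmetric] sum.distrib[symmetric])
  qed
qed




theorem proposition3p4:
  fixes \<alpha> :: "'x::ab_group_add opsys \<Rightarrow> 'y::ab_group_add opsys \<Rightarrow> nat \<Rightarrow> ('x, 'y) tens mat set"
    and X X0 :: "'x opsys" and Y Y0 :: "'y opsys"
  assumes "os_tensor_product \<alpha>" and "functorial \<alpha>"
    and "subsystem X0 X" and "subsystem Y0 Y"
  shows "ind_cp (tensor_os X Y (\<alpha> X Y))
           (restrict_os (tensor_os X Y (\<alpha> X Y)) (tens_span X Y (ocarrier X0) (ocarrier Y0)))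
         \<le> ind_cp X X0 * ind_cp Y Y0"
proof -
  have X: "is_opsys X" using assms(3) unfolding subsystem_def by blast
  have Y: "is_opsys Y" using assms(4) unfolding subsystem_def by blast
  note F = assms(2)
  define R where "R = tensor_os X Y (\<alpha> X Y)"
  have "os_structure X Y (\<alpha> X Y)" using assms(1) X Y unfolding os_tensor_product_def by blast
  hence RO: "is_opsys R" unfolding R_def os_structure_def by (rule conjunct1)
  define S0 where "S0 = tens_span X Y (ocarrier X0) (ocarrier Y0)"
  define PX where "PX = (\<lambda>\<phi>. cp X X \<phi> \<and> (\<forall>c. \<exists>d. \<phi> (oscal X c (ounit X)) = oscal X d (ounit X)) \<and>
      (\<forall>x\<in>ocarrier X. \<phi> x \<in> ocarrier X0) \<and> cp X X (\<lambda>x. \<phi> x - x))"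
  define PY where "PY = (\<lambda>\<phi>. cp Y Y \<phi> \<and> (\<forall>c. \<exists>d. \<phi> (oscal Y c (ounit Y)) = oscal Y d (ounit Y)) \<and>
      (\<forall>x\<in>ocarrier Y. \<phi> x \<in> ocarrier Y0) \<and> cp Y Y (\<lambda>x. \<phi> x - x))"
  define PR where "PR = (\<lambda>\<phi>. cp R R \<phi> \<and> (\<forall>c. \<exists>d. \<phi> (oscal R c (ounit R)) = oscal R d (ounit R)) \<and>
      (\<forall>x\<in>ocarrier R. \<phi> x \<in> S0) \<and> cp R R (\<lambda>x. \<phi> x - x))"
  have iX: "ind_cp X X0 = Inf (ereal ` {opnorm X (\<phi> (ounit X)) | \<phi>. PX \<phi>})"
    unfolding ind_cp_def PX_def by (intro arg_cong[where f=Inf]) auto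
  have iY: "ind_cp Y Y0 = Inf (ereal ` {opnorm Y (\<phi> (ounit Y)) | \<phi>. PY \<phi>})"
    unfolding ind_cp_def PY_def by (intro arg_cong[where f=Inf]) auto
  have iR: "ind_cp R (restrict_os R S0) = Inf {ereal (opnorm R (\<phi> (ounit R))) | \<phi>. PR \<phi>}"
    unfolding ind_cp_def PR_def by (simp add: restrict_os_def)
  have lowR: "ind_cp R (restrict_os R S0) \<le> ereal (opnorm R (\<Phi> (ounit R)))" if "PR \<Phi>" for \<Phi>
    unfolding iR using that by (intro Inf_lower) blast
  have uR: "ounit R = tensor X Y (ounit X) (ounit Y)" unfolding R_def by (simp add: unitR)
  have cR: "ocarrier R = tens_span X Y (ocarrier X) (ocarrier Y)" unfolding R_def by (simp add: carrR)
  have sR: "oscal R c t = (\<lambda>f g. c * t f g)" for c t unfolding R_def by (simp add: oscalR)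
  have key: "ind_cp R (restrict_os R S0) \<le> ind_cp X X0 * ind_cp Y Y0"
  proof (cases "ounit X = 0 \<or> ounit Y = 0")
    case True
    have triv: "\<forall>t\<in>ocarrier R. t = 0"
    proof
      fix t assume "t \<in> ocarrier R"
      hence "t \<in> tens_span X Y (ocarrier X) (ocarrier Y)" using cR by simp
      then obtain N :: nat and a b where ab: "\<forall>k<N. a k \<in> ocarrier X \<and> b k \<in> ocarrier Y"
        and t: "t = (\<lambda>f g. \<Sum>k<N. tensor X Y (a k) (b k) f g)" using span_obtain by blast
      show "t = 0"
      proof (cases "ounit X = 0")
        case True
        hence u0: "(\<lambda>x. x) (ounit X) = 0" by simp
        have "\<forall>x\<in>ocarrier X. x = 0"
        proof
          fix x assume "x \<in> ocarrier X"
          from zero_lemma[OF X cp_id u0 this] show "x = 0" by simp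
        qed
        hence a0: "\<forall>k<N. a k = 0" using ab by blast
        have "\<forall>f g. (\<Sum>k<N. tensor X Y (a k) (b k) f g) = 0"
          by (intro allI sum.neutral) (simp add: a0 tensor_zero[OF X])
        thus ?thesis unfolding t by (simp add: fun_eq_iff)
      next
        case False
        hence "ounit Y = 0" using \<open>ounit X = 0 \<or> ounit Y = 0\<close> by simp
        hence u0: "(\<lambda>x. x) (ounit Y) = 0" by simp
        have "\<forall>x\<in>ocarrier Y. x = 0"
        proof
          fix x assume "x \<in> ocarrier Y"
          from zero_lemma[OF Y cp_id u0 this] show "x = 0" by simp
        qed
        hence a0: "\<forall>k<N. b k = 0" using ab by blast
        have "\<forall>f g. (\<Sum>k<N. tensor X Y (a k) (b k) f g) = 0"
          by (intro allI sum.neutral) (simp add: a0 tensor_zero2[OF Y])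
        thus ?thesis unfolding t by (simp add: fun_eq_iff)
      qed
    qed
    have "PR (\<lambda>t. t)"
      unfolding PR_def
    proof (intro conjI allI ballI)
      show "cp R R (\<lambda>t. t)" by (rule cp_id)
      show "\<exists>d. oscal R c (ounit R) = oscal R d (ounit R)" for c by blast
      fix t assume "t \<in> ocarrier R"
      hence "t = 0" using triv by blast
      moreover have "(0::('x,'y) tens) = (\<lambda>f g. \<Sum>k<(0::nat). tensor X Y ((\<lambda>k. 0) k) ((\<lambda>k. 0) k) f g)"
        by (simp add: fun_eq_iff)
      moreover have "(\<lambda>f g. \<Sum>k<(0::nat). tensor X Y ((\<lambda>k. 0) k) ((\<lambda>k. 0) k) f g) \<in> S0"
        unfolding S0_def by (rule span_intro) simp
      ultimately show "t \<in> S0" by simp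
    next
      show "cp R R (\<lambda>t. t - t)" by (rule cp_zero[OF RO RO]) simp
    qed
    hence "ind_cp R (restrict_os R S0) \<le> ereal (opnorm R (ounit R))" using lowR[of "\<lambda>t. t"] by simp
    also have "ounit R = oscal R (of_real 0) (ounit R)" using triv os_unit[OF RO] sR by (simp add: fun_eq_iff)
    hence "opnorm R (ounit R) \<le> 0" using opnorm_upper[OF RO, of 0] by simp
    finally have l: "ind_cp R (restrict_os R S0) \<le> 0" by (simp add: zero_ereal_def)
    have "ind_cp X X0 \<ge> 0" unfolding iX
    proof (rule Inf_greatest)
      fix z assume "z \<in> ereal ` {opnorm X (\<phi> (ounit X)) |\<phi>. PX \<phi>}"
      then obtain \<phi> where p: "PX \<phi>" and z: "z = ereal (opnorm X (\<phi> (ounit X)))" by blast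
      have "cp X X \<phi>" using p unfolding PX_def by blast
      hence "\<phi> (ounit X) \<in> ocarrier X" using cp_in os_unit[OF X] by blast
      thus "0 \<le> z" using opnorm_nonneg[OF X] z by simp
    qed
    moreover have "ind_cp Y Y0 \<ge> 0" unfolding iY
    proof (rule Inf_greatest)
      fix z assume "z \<in> ereal ` {opnorm Y (\<phi> (ounit Y)) |\<phi>. PY \<phi>}"
      then obtain \<phi> where p: "PY \<phi>" and z: "z = ereal (opnorm Y (\<phi> (ounit Y)))" by blast
      have "cp Y Y \<phi>" using p unfolding PY_def by blast
      hence "\<phi> (ounit Y) \<in> ocarrier Y" using cp_in os_unit[OF Y] by blast
      thus "0 \<le> z" using opnorm_nonneg[OF Y] z by simp
    qed
    ultimately show ?thesis using l by (metis ereal_0_le_mult order_trans)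
  next
    case False
    hence uX: "ounit X \<noteq> 0" and uY: "ounit Y \<noteq> 0" by auto
    have scalX: "\<exists>r\<ge>0. \<phi> (ounit X) = oscal X (of_real (1 + r)) (ounit X)" if hX: "PX \<phi>" for \<phi>
    proof -
      obtain d where "\<phi> (oscal X 1 (ounit X)) = oscal X d (ounit X)" using hX unfolding PX_def by blast
      hence d: "\<phi> (ounit X) = oscal X d (ounit X)" using os_one_scal[OF X os_unit[OF X]] by simp
      have p: "cp X X \<phi>" "cp X X (\<lambda>x. \<phi> x - x)" using hX unfolding PX_def by auto
      obtain r where "r \<ge> 0" "d = of_real (1 + r)" using adm_scalar[OF X uX p(1) d p(2)] by blast
      thus ?thesis using d by blast
    qed
    have scalY: "\<exists>r\<ge>0. \<phi> (ounit Y) = oscal Y (of_real (1 + r)) (ounit Y)" if hY: "PY \<phi>" for \<phi>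
    proof -
      obtain d where "\<phi> (oscal Y 1 (ounit Y)) = oscal Y d (ounit Y)" using hY unfolding PY_def by blast
      hence d: "\<phi> (ounit Y) = oscal Y d (ounit Y)" using os_one_scal[OF Y os_unit[OF Y]] by simp
      have p: "cp Y Y \<phi>" "cp Y Y (\<lambda>x. \<phi> x - x)" using hY unfolding PY_def by auto
      obtain r where "r \<ge> 0" "d = of_real (1 + r)" using adm_scalar[OF Y uY p(1) d p(2)] by blast
      thus ?thesis using d by blast
    qed
    have geX: "opnorm X (\<phi> (ounit X)) \<ge> 1" if hX: "PX \<phi>" for \<phi>
    proof -
      obtain r where r: "r \<ge> 0" "\<phi> (ounit X) = oscal X (of_real (1 + r)) (ounit X)" using scalX[OF hX] by blast
      show ?thesis using opnorm_lower[OF X uX, of "1 + r"] r by simp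
    qed
    have geY: "opnorm Y (\<phi> (ounit Y)) \<ge> 1" if hY: "PY \<phi>" for \<phi>
    proof -
      obtain r where r: "r \<ge> 0" "\<phi> (ounit Y) = oscal Y (of_real (1 + r)) (ounit Y)" using scalY[OF hY] by blast
      show ?thesis using opnorm_lower[OF Y uY, of "1 + r"] r by simp
    qed
    have main: "ind_cp R (restrict_os R S0) \<le> ereal (opnorm X (\<phi> (ounit X)) * opnorm Y (\<psi> (ounit Y)))"
      if pX: "PX \<phi>" and pY: "PY \<psi>" for \<phi> \<psi>
    proof -
      obtain r where r: "r \<ge> 0" and \<phi>1: "\<phi> (ounit X) = oscal X (of_real (1 + r)) (ounit X)" using scalX[OF pX] by blast
      obtain s where s: "s \<ge> 0" and \<psi>1: "\<psi> (ounit Y) = oscal Y (of_real (1 + s)) (ounit Y)" using scalY[OF pY] by blast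
      have p: "cp X X \<phi>" and pm: "cp X X (\<lambda>x. \<phi> x - x)" and p0: "\<forall>x\<in>ocarrier X. \<phi> x \<in> ocarrier X0"
        using pX unfolding PX_def by auto
      have q: "cp Y Y \<psi>" and qm: "cp Y Y (\<lambda>x. \<psi> x - x)" and q0: "\<forall>x\<in>ocarrier Y. \<psi> x \<in> ocarrier Y0"
        using pY unfolding PY_def by auto
      note UX = os_unit[OF X] and UY = os_unit[OF Y]
      have \<phi>m1: "(\<lambda>x. \<phi> x - x) (ounit X) = oscal X (of_real r) (ounit X)"
        using \<phi>1 os_add_scal[OF X UX, of 1 "of_real r"] os_one_scal[OF X UX] by simp
      have \<psi>m1: "(\<lambda>x. \<psi> x - x) (ounit Y) = oscal Y (of_real s) (ounit Y)"
        using \<psi>1 os_add_scal[OF Y UY, of 1 "of_real s"] os_one_scal[OF Y UY] by simp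
      have idX: "(\<lambda>x. x) (ounit X) = oscal X (of_real 1) (ounit X)" using os_one_scal[OF X UX] by simp
      have RO': "is_opsys (tensor_os X Y (\<alpha> X Y))" using RO unfolding R_def .
      define \<Phi> where "\<Phi> = tmap X Y X Y \<phi> \<psi>"
      have c\<Phi>: "cp R R \<Phi>" unfolding \<Phi>_def R_def
        by (rule cp_tmap[OF X Y RO' F p \<phi>1 _ q \<psi>1]) (use r s in auto)
      have cA: "cp R R (tmap X Y X Y (\<lambda>x. \<phi> x - x) \<psi>)" unfolding R_def
        by (rule cp_tmap[OF X Y RO' F pm \<phi>m1 r q \<psi>1]) (use s in auto)
      have cB: "cp R R (tmap X Y X Y (\<lambda>x. x) (\<lambda>x. \<psi> x - x))" unfolding R_def
        by (rule cp_tmap[OF X Y RO' F cp_id idX _ qm \<psi>m1 s]) simp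
      have c\<Phi>m: "cp R R (\<lambda>t. \<Phi> t - t)"
        by (rule cp_sum[OF RO RO cA cB]) (use tmap_diff_eq[OF X Y p q pm qm] cR in \<open>auto simp: \<Phi>_def\<close>)
      have U1: "ounit R = (\<lambda>f g. \<Sum>k<(1::nat). tensor X Y ((\<lambda>k. ounit X) k) ((\<lambda>k. ounit Y) k) f g)"
        using uR by simp
      have "\<Phi> (ounit R) = (\<lambda>f g. \<Sum>k<(1::nat). tensor X Y (\<phi> ((\<lambda>k. ounit X) k)) (\<psi> ((\<lambda>k. ounit Y) k)) f g)"
        unfolding \<Phi>_def by (subst U1, rule tmap_sum[OF X Y cp_linmap[OF p] cp_linmap[OF q]]) (simp add: UX UY)
      also have "\<dots> = oscal R (of_real ((1 + r) * (1 + s))) (ounit R)"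
        unfolding sR uR \<phi>1 \<psi>1 by (simp add: tensor_scal[OF UX UY] fun_eq_iff)
      finally have \<Phi>1: "\<Phi> (ounit R) = oscal R (of_real ((1 + r) * (1 + s))) (ounit R)" .
      have "PR \<Phi>"
        unfolding PR_def
      proof (intro conjI allI ballI)
        show "cp R R \<Phi>" by (rule c\<Phi>)
        show "cp R R (\<lambda>x. \<Phi> x - x)" by (rule c\<Phi>m)
        fix c
        have "\<Phi> (oscal R c (ounit R)) = oscal R c (\<Phi> (ounit R))" using cp_scal[OF c\<Phi> os_unit[OF RO]] .
        also have "\<dots> = oscal R (c * of_real ((1 + r) * (1 + s))) (ounit R)" unfolding \<Phi>1 sR by (simp add: mult.assoc)
        finally show "\<exists>d. \<Phi> (oscal R c (ounit R)) = oscal R d (ounit R)" by blast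
      next
        fix t assume "t \<in> ocarrier R"
        hence "t \<in> tens_span X Y (ocarrier X) (ocarrier Y)" using cR by simp
        then obtain N :: nat and a b where ab: "\<forall>k<N. a k \<in> ocarrier X \<and> b k \<in> ocarrier Y"
          and t: "t = (\<lambda>f g. \<Sum>k<N. tensor X Y (a k) (b k) f g)" using span_obtain by blast
        have "\<Phi> t = (\<lambda>f g. \<Sum>k<N. tensor X Y ((\<lambda>k. \<phi> (a k)) k) ((\<lambda>k. \<psi> (b k)) k) f g)"
          unfolding \<Phi>_def t tmap_sum[OF X Y cp_linmap[OF p] cp_linmap[OF q] ab] by simp
        also have "\<dots> \<in> S0" unfolding S0_def by (rule span_intro) (use ab p0 q0 in auto)
        finally show "\<Phi> t \<in> S0" .
      qed
      hence "ind_cp R (restrict_os R S0) \<le> ereal (opnorm R (\<Phi> (ounit R)))" by (rule lowR)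
      also have "opnorm R (\<Phi> (ounit R)) \<le> (1 + r) * (1 + s)" unfolding \<Phi>1
        by (rule opnorm_upper[OF RO]) (use r s in simp)
      also have "(1 + r) * (1 + s) \<le> opnorm X (\<phi> (ounit X)) * opnorm Y (\<psi> (ounit Y))"
        by (rule mult_mono) (use opnorm_lower[OF X uX, of "1 + r"] opnorm_lower[OF Y uY, of "1 + s"] r s \<phi>1 \<psi>1 in auto)
      finally show ?thesis by simp
    qed
    show ?thesis unfolding iX iY
      by (rule inf_prod) (use geX geY main in auto)
  qed
  thus ?thesis unfolding R_def S0_def .
qed


end
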